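(* Fix $D_0>0$, $\alpha>0$, $p^a\ge0$, $\gamma\in(0,1)$. Let $d(p^s,p^c)=\max\{D_0-\alpha(p^s+p^c),0\}$. Consider the ex post regulation game in which the ISP chooses $p^s\in\mathbb{R}$ and the CP chooses $p^c\in\mathbb{R}$ simultaneously, with payoffs $$U_{ISP}(p^s,p^c)=\gamma\, d(p^s,p^c)\,(p^s+p^c+p^a),\qquad U_{CP}(p^s,p^c)=(1-\gamma)\, d(p^s,p^c)\,(p^s+p^c+p^a).$$ A profile $(p^s,p^c)$ is a pure-strategy Nash equilibrium if and only if $$p^s+p^c=\frac{D_0-\alpha p^a}{2\alpha}.$$ In particular: - the pure-strategy equilibrium exists and is unique up to a free choice of $p^s$ (equivalently of $p^c$), with the net internaut price uniquely determined; - at every equilibrium the demand equals $\frac{D_0+\alpha p^a}{2}>0$; - there is no equilibrium with zero demand; - at equilibrium the net revenue per unit demand $p^s+p^c+p^a=\frac{D_0+\alpha p^a}{2\alpha}$ is shared in proportions $\gamma$ and $1-\gamma$ by the ISP and the CP. This sharing is effected by the regulator's choice $p^d=\gamma(p^c+p^a)-(1-\gamma)p^s$.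
   Context: Single ISP, single CP model. - $p^s$ and $p^c$ are the prices per unit demand paid by internauts to the ISP and to the CP respectively. - $p^a\ge0$ is the CP's advertising revenue per unit demand. - $p^d$ is the payment per unit demand from the CP to the ISP. - The ISP's utility is $d\,(p^s+p^d)$ and the CP's utility is $d\,(p^c+p^a-p^d)$. In the ex post regulation game, the players first set $p^s$ and $p^c$. Afterwards a regulator sets $p^d$ to maximize $U_{ISP}^\gamma U_{CP}^{1-\gamma}$, which gives $p^d=\gamma(p^c+p^a)-(1-\gamma)p^s$. Hence the ISP receives $p^s+p^d=\gamma(p^s+p^c+p^a)$ and the CP receives $p^c+p^a-p^d=(1-\gamma)(p^s+p^c+p^a)$ per unit demand. This yields the payoffs stated in the claim. *)

theory Defs
  imports Complex_Main
begin

definition demand :: "real \<Rightarrow> real \<Rightarrow> real \<Rightarrow> real \<Rightarrow> real" where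
  "demand D0 \<alpha> ps pc = max (D0 - \<alpha> * (ps + pc)) 0"

definition U_ISP :: "real \<Rightarrow> real \<Rightarrow> real \<Rightarrow> real \<Rightarrow> real \<Rightarrow> real \<Rightarrow> real" where
  "U_ISP D0 \<alpha> pa \<gamma> ps pc = \<gamma> * demand D0 \<alpha> ps pc * (ps + pc + pa)"

definition U_CP :: "real \<Rightarrow> real \<Rightarrow> real \<Rightarrow> real \<Rightarrow> real \<Rightarrow> real \<Rightarrow> real" where
  "U_CP D0 \<alpha> pa \<gamma> ps pc = (1 - \<gamma>) * demand D0 \<alpha> ps pc * (ps + pc + pa)"

definition reg_pd :: "real \<Rightarrow> real \<Rightarrow> real \<Rightarrow> real \<Rightarrow> real" where
  "reg_pd pa \<gamma> ps pc = \<gamma> * (pc + pa) - (1 - \<gamma>) * ps"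

definition is_NE :: "real \<Rightarrow> real \<Rightarrow> real \<Rightarrow> real \<Rightarrow> real \<Rightarrow> real \<Rightarrow> bool" where
  "is_NE D0 \<alpha> pa \<gamma> ps pc \<longleftrightarrow>
     (\<forall>ps'. U_ISP D0 \<alpha> pa \<gamma> ps' pc \<le> U_ISP D0 \<alpha> pa \<gamma> ps pc) \<and>
     (\<forall>pc'. U_CP D0 \<alpha> pa \<gamma> ps pc' \<le> U_CP D0 \<alpha> pa \<gamma> ps pc)"

end

theory Submission
  imports Defs
begin

lemma gkey:
  fixes D0 \<alpha> pa t :: real
  assumes "D0 > 0" and "\<alpha> > 0" and "pa \<ge> 0"
  defines "S \<equiv> (D0 - \<alpha> * pa) / (2 * \<alpha>)"
  shows "max (D0 - \<alpha> * t) 0 * (t + pa) \<le> max (D0 - \<alpha> * S) 0 * (S + pa)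
     \<and> (t \<noteq> S \<longrightarrow> max (D0 - \<alpha> * t) 0 * (t + pa) < max (D0 - \<alpha> * S) 0 * (S + pa))"
proof -
  have dS: "D0 - \<alpha> * S = (D0 + \<alpha> * pa) / 2" using assms by (simp add: S_def field_simps)
  have pS: "S + pa = (D0 + \<alpha> * pa) / (2*\<alpha>)" using assms by (simp add: S_def field_simps)
  have pos: "D0 + \<alpha> * pa > 0" using assms by (simp add: add_pos_nonneg)
  have gS: "max (D0 - \<alpha> * S) 0 * (S + pa) = (D0 + \<alpha> * pa)^2 / (4*\<alpha>)"
    using pos assms by (simp add: dS pS power2_eq_square field_simps)
  have gSpos: "(D0 + \<alpha> * pa)^2 / (4*\<alpha>) > 0" using pos assms by simp
  show ?thesis
  proof (cases "D0 - \<alpha> * t > 0")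
    case True
    have "(D0 - \<alpha> * t) * (t + pa) = (D0 + \<alpha> * pa)^2 / (4*\<alpha>) - \<alpha> * (t - S)^2"
      using assms by (simp add: S_def power2_eq_square field_simps)
    moreover have "t \<noteq> S \<Longrightarrow> \<alpha> * (t - S)^2 > 0" using assms by simp
    moreover have "\<alpha> * (t - S)^2 \<ge> 0" using assms by simp
    ultimately show ?thesis using True gS by (auto simp: max_def)
  next
    case False
    then show ?thesis using gS gSpos by (auto simp: max_def)
  qed
qed

theorem theorem2:
  fixes D0 \<alpha> pa \<gamma> :: real
  assumes "D0 > 0" and "\<alpha> > 0" and "pa \<ge> 0" and "0 < \<gamma>" and "\<gamma> < 1"
  shows "(\<forall>ps pc. is_NE D0 \<alpha> pa \<gamma> ps pc \<longleftrightarrow> ps + pc = (D0 - \<alpha> * pa) / (2 * \<alpha>))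
    \<and> (\<forall>ps. \<exists>!pc. is_NE D0 \<alpha> pa \<gamma> ps pc)
    \<and> (\<forall>pc. \<exists>!ps. is_NE D0 \<alpha> pa \<gamma> ps pc)
    \<and> (\<forall>ps pc. is_NE D0 \<alpha> pa \<gamma> ps pc \<longrightarrow>
          demand D0 \<alpha> ps pc = (D0 + \<alpha> * pa) / 2 \<and> demand D0 \<alpha> ps pc > 0
        \<and> ps + pc + pa = (D0 + \<alpha> * pa) / (2 * \<alpha>)
        \<and> ps + reg_pd pa \<gamma> ps pc = \<gamma> * (ps + pc + pa)
        \<and> pc + pa - reg_pd pa \<gamma> ps pc = (1 - \<gamma>) * (ps + pc + pa))"
proof -
  define S where "S = (D0 - \<alpha> * pa) / (2 * \<alpha>)"
  define g where "g t = max (D0 - \<alpha> * t) 0 * (t + pa)" for t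
  have G: "g t \<le> g S" "t \<noteq> S \<Longrightarrow> g t < g S" for t
    using gkey[OF assms(1-3), of t] by (auto simp: g_def S_def)
  have UI: "U_ISP D0 \<alpha> pa \<gamma> ps pc = \<gamma> * g (ps + pc)" for ps pc
    by (simp add: U_ISP_def g_def demand_def add.assoc)
  have UC: "U_CP D0 \<alpha> pa \<gamma> ps pc = (1 - \<gamma>) * g (ps + pc)" for ps pc
    by (simp add: U_CP_def g_def demand_def add.assoc)
  have g1: "0 < 1 - \<gamma>" using assms by simp
  have NE: "is_NE D0 \<alpha> pa \<gamma> ps pc \<longleftrightarrow> ps + pc = S" for ps pc
  proof
    assume h: "is_NE D0 \<alpha> pa \<gamma> ps pc"
    then have "U_ISP D0 \<alpha> pa \<gamma> (S - pc) pc \<le> U_ISP D0 \<alpha> pa \<gamma> ps pc"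
      unfolding is_NE_def by blast
    then have "\<gamma> * g S \<le> \<gamma> * g (ps + pc)" by (simp add: UI)
    then have "g S \<le> g (ps + pc)" using assms(4) by simp
    then show "ps + pc = S" using G(2)[of "ps+pc"] by fastforce
  next
    assume h: "ps + pc = S"
    show "is_NE D0 \<alpha> pa \<gamma> ps pc" unfolding is_NE_def UI UC h
      using G assms(4) g1 by (auto intro!: mult_left_mono)
  qed
  have dS: "D0 - \<alpha> * S = (D0 + \<alpha> * pa) / 2" using assms by (simp add: S_def field_simps)
  have pS: "S + pa = (D0 + \<alpha> * pa) / (2*\<alpha>)" using assms by (simp add: S_def field_simps)
  have pos: "D0 + \<alpha> * pa > 0" using assms by (simp add: add_pos_nonneg)
  show ?thesis
  proof (intro conjI allI impI)
    fix ps pc show "is_NE D0 \<alpha> pa \<gamma> ps pc = (ps + pc = (D0 - \<alpha> * pa) / (2 * \<alpha>))"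
      using NE S_def by simp
  next
    fix ps show "\<exists>!pc. is_NE D0 \<alpha> pa \<gamma> ps pc"
      by (rule ex1I[of _ "S - ps"]) (auto simp: NE)
  next
    fix pc show "\<exists>!ps. is_NE D0 \<alpha> pa \<gamma> ps pc"
      by (rule ex1I[of _ "S - pc"]) (auto simp: NE)
  next
    fix ps pc assume "is_NE D0 \<alpha> pa \<gamma> ps pc"
    then have s: "ps + pc = S" using NE by simp
    show "demand D0 \<alpha> ps pc = (D0 + \<alpha> * pa) / 2"
      using s dS pos by (simp add: demand_def)
    show "demand D0 \<alpha> ps pc > 0"
      using s dS pos by (simp add: demand_def)
    show "ps + pc + pa = (D0 + \<alpha> * pa) / (2 * \<alpha>)" using s pS by simp
  next
    fix ps pc show "ps + reg_pd pa \<gamma> ps pc = \<gamma> * (ps + pc + pa)"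
      by (simp add: reg_pd_def algebra_simps)
  next
    fix ps pc show "pc + pa - reg_pd pa \<gamma> ps pc = (1 - \<gamma>) * (ps + pc + pa)"
      by (simp add: reg_pd_def algebra_simps)
  qed
qed

end
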